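(* If a closed-loop DT model $\bar F:\mathbb{R}^n\times(0,\infty)\to\mathbb{R}^n$ is SLES-VSR, then it is SS-VSR.
   Context: Solutions: $x_{k+1}=\bar F(x_k,T_k)$. $\Phi(T)$: set of sequences $\{T_i\}_{i\ge0}$ with $T_i\in(0,T)$; $\sum_{i=0}^{-1}T_i=0$. $\mathcal{KL}$: $\beta:\mathbb{R}_{\ge0}^2\to\mathbb{R}_{\ge0}$, continuous strictly increasing with $\beta(0,t)=0$ in the first argument, strictly decreasing to $0$ in the second. SPS-VSR: there is $\beta\in\mathcal{KL}$ such that for every $M\ge0$, $R>0$ there is $T^\star(M,R)>0$ with $|x_k|\le\beta(|x_0|,\sum_{i=0}^{k-1}T_i)+R$ for all $k\in\mathbb{N}_0$, $\{T_i\}\in\Phi(T^\star)$, $|x_0|\le M$. LES-VSR: there exist $K\ge1$, $R,T^\star,\lambda>0$ with $|x_k|\le K|x_0|e^{-\lambda\sum_{i=0}^{k-1}T_i}$ for all $k$, $\{T_i\}\in\Phi(T^\star)$, $|x_0|\le R$. SLES-VSR: SPS-VSR and LES-VSR. SS-VSR: there is $\beta\in\mathcal{KL}$ such that for every $M\ge0$ there is $T^\star(M)>0$ with $|x_k|\le\beta(|x_0|,\sum_{i=0}^{k-1}T_i)$ for all $k\in\mathbb{N}_0$, $\{T_i\}\in\Phi(T^\star)$, $|x_0|\le M$. *)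

theory Defs
  imports "HOL-Analysis.Analysis"
begin

primrec traj :: "('a \<Rightarrow> real \<Rightarrow> 'a) \<Rightarrow> 'a \<Rightarrow> (nat \<Rightarrow> real) \<Rightarrow> nat \<Rightarrow> 'a" where
  "traj F x0 T 0 = x0"
| "traj F x0 T (Suc k) = F (traj F x0 T k) (T k)"

definition Phi :: "real \<Rightarrow> (nat \<Rightarrow> real) set" where
  "Phi Tm = {T. \<forall>i. 0 < T i \<and> T i < Tm}"

definition classKL :: "(real \<Rightarrow> real \<Rightarrow> real) \<Rightarrow> bool" where
  "classKL \<beta> \<longleftrightarrow>
     continuous_on ({0..} \<times> {0..}) (\<lambda>(s,t). \<beta> s t) \<and>
     (\<forall>s\<ge>0. \<forall>t\<ge>0. \<beta> s t \<ge> 0) \<and>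
     (\<forall>t\<ge>0. \<beta> 0 t = 0 \<and> strict_mono_on {0..} (\<lambda>s. \<beta> s t)) \<and>
     (\<forall>s>0. (\<forall>t1 t2. 0 \<le> t1 \<longrightarrow> t1 < t2 \<longrightarrow> \<beta> s t2 < \<beta> s t1) \<and>
             ((\<lambda>t. \<beta> s t) \<longlongrightarrow> 0) at_top)"

definition SPS_VSR :: "('a::real_normed_vector \<Rightarrow> real \<Rightarrow> 'a) \<Rightarrow> bool" where
  "SPS_VSR F \<longleftrightarrow> (\<exists>\<beta>. classKL \<beta> \<and>
     (\<forall>M\<ge>0. \<forall>R>0. \<exists>Ts>0. \<forall>k x0 T. T \<in> Phi Ts \<longrightarrow> norm x0 \<le> M \<longrightarrow>
        norm (traj F x0 T k) \<le> \<beta> (norm x0) (\<Sum>i<k. T i) + R))"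

definition LES_VSR :: "('a::real_normed_vector \<Rightarrow> real \<Rightarrow> 'a) \<Rightarrow> bool" where
  "LES_VSR F \<longleftrightarrow> (\<exists>K R Ts lam::real. K \<ge> 1 \<and> R > 0 \<and> Ts > 0 \<and> lam > 0 \<and>
     (\<forall>k x0 T. T \<in> Phi Ts \<longrightarrow> norm x0 \<le> R \<longrightarrow>
        norm (traj F x0 T k) \<le> K * norm x0 * exp (- lam * (\<Sum>i<k. T i))))"

definition SLES_VSR :: "('a::real_normed_vector \<Rightarrow> real \<Rightarrow> 'a) \<Rightarrow> bool" where
  "SLES_VSR F \<longleftrightarrow> SPS_VSR F \<and> LES_VSR F"

definition SS_VSR :: "('a::real_normed_vector \<Rightarrow> real \<Rightarrow> 'a) \<Rightarrow> bool" where
  "SS_VSR F \<longleftrightarrow> (\<exists>\<beta>. classKL \<beta> \<and>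
     (\<forall>M\<ge>0. \<exists>Ts>0. \<forall>k x0 T. T \<in> Phi Ts \<longrightarrow> norm x0 \<le> M \<longrightarrow>
        norm (traj F x0 T k) \<le> \<beta> (norm x0) (\<Sum>i<k. T i)))"

end

theory Submission
  imports Defs
begin

lemma traj_shift: "traj F x0 T (m + j) = traj F (traj F x0 T m) (\<lambda>i. T (m+i)) j"
  by (induction j) auto

lemma sum_shift: "(\<Sum>i<m+j. T i) = (\<Sum>i<m. T i) + (\<Sum>i<j. T (m+i)::real)" for m j :: nat
  by (induction j) auto

lemma KL_anti:
  assumes "classKL \<beta>" "0 \<le> s" "0 \<le> t1" "t1 \<le> t2"
  shows "\<beta> s t2 \<le> \<beta> s t1"
proof (cases "s = 0")
  case True then show ?thesis using assms unfolding classKL_def by auto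
next
  case False
  then have "s > 0" using assms by auto
  then show ?thesis using assms unfolding classKL_def
    by (metis order_le_less)
qed

lemma KL_mono:
  assumes "classKL \<beta>" "0 \<le> s1" "s1 \<le> s2" "0 \<le> t"
  shows "\<beta> s1 t \<le> \<beta> s2 t"
proof -
  have "strict_mono_on {0..} (\<lambda>s. \<beta> s t)" using assms unfolding classKL_def by auto
  then show ?thesis using assms
    by (metis atLeast_iff order.trans order_le_less strict_mono_onD)
qed

lemma KL_nonneg: "classKL \<beta> \<Longrightarrow> 0 \<le> s \<Longrightarrow> 0 \<le> t \<Longrightarrow> 0 \<le> \<beta> s t"
  unfolding classKL_def by auto

lemma KL_pos: "classKL \<beta> \<Longrightarrow> 0 < s \<Longrightarrow> 0 \<le> t \<Longrightarrow> 0 < \<beta> s t"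
proof -
  assume a: "classKL \<beta>" "0 < s" "0 \<le> t"
  then have "strict_mono_on {0..} (\<lambda>s. \<beta> s t)" "\<beta> 0 t = 0" unfolding classKL_def by auto
  then show ?thesis using a by (metis atLeast_iff order_refl less_imp_le strict_mono_onD)
qed


lemma B_KL:
  assumes KL: "classKL \<beta>" and K: "K \<ge> 1" and lam: "lam > 0"
  shows "classKL (\<lambda>s t. 2*K*(\<beta> s (max (t/2-1) 0) + \<beta> s 0 * exp(-lam*t/2)) + K * s * exp(-lam*t))"
proof -
  let ?B = "\<lambda>s t. 2*K*(\<beta> s (max (t/2-1) 0) + \<beta> s 0 * exp(-lam*t/2)) + K * s * exp(-lam*t)"
  have cb: "continuous_on ({0..} \<times> {0..}) (\<lambda>(s,t). \<beta> s t)" using KL unfolding classKL_def by auto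
  have c1: "continuous_on ({0..} \<times> {0..}) (\<lambda>p. \<beta> (fst p) (max (snd p/2-1) 0))"
  proof -
    have "continuous_on ({0..} \<times> {0..}) ((\<lambda>(s,t). \<beta> s t) \<circ> (\<lambda>p. (fst p, max (snd p/2-1) 0)))"
      apply (rule continuous_on_compose)
       apply (intro continuous_intros)
       apply simp
      apply (rule continuous_on_subset[OF cb])
      by auto
    then show ?thesis by (simp add: o_def)
  qed
  have c2: "continuous_on ({0..} \<times> {0..}) (\<lambda>p. \<beta> (fst p) 0)"
  proof -
    have "continuous_on ({0..} \<times> {0..}) ((\<lambda>(s,t). \<beta> s t) \<circ> (\<lambda>p. (fst p, 0::real)))"
      apply (rule continuous_on_compose)
       apply (intro continuous_intros)
      apply (rule continuous_on_subset[OF cb])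
      by auto
    then show ?thesis by (simp add: o_def)
  qed
  have "continuous_on ({0..} \<times> {0..}) (\<lambda>p. ?B (fst p) (snd p))"
    using c1 c2 by (intro continuous_intros) auto
  then have C: "continuous_on ({0..} \<times> {0..}) (\<lambda>(s,t). ?B s t)"
    by (simp add: case_prod_beta')
  have N: "\<forall>s\<ge>0. \<forall>t\<ge>0. ?B s t \<ge> 0"
    using KL_nonneg[OF KL] K by (intro allI impI add_nonneg_nonneg mult_nonneg_nonneg) auto
  have Z: "\<forall>t\<ge>0. ?B 0 t = 0" using KL unfolding classKL_def by auto
  have SM: "\<forall>t\<ge>0. strict_mono_on {0..} (\<lambda>s. ?B s t)"
  proof (intro allI impI strict_mono_onI)
    fix t s1 s2 :: real assume t: "t \<ge> 0" and s: "s1 \<in> {0..}" "s2 \<in> {0..}" "s1 < s2"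
    have a: "\<beta> s1 (max (t/2-1) 0) \<le> \<beta> s2 (max (t/2-1) 0)"
      using s by (intro KL_mono[OF KL]) auto
    have b: "\<beta> s1 0 \<le> \<beta> s2 0" using s by (intro KL_mono[OF KL]) auto
    have b2: "\<beta> s1 0 * exp(-lam*t/2) \<le> \<beta> s2 0 * exp(-lam*t/2)"
      using b by (intro mult_right_mono) auto
    have c: "K * s1 * exp(-lam*t) < K * s2 * exp(-lam*t)" using s K by simp
    show "?B s1 t < ?B s2 t"
      using a b2 c K by (smt (verit) mult_left_mono)
  qed
  have SD: "\<forall>s>0. (\<forall>t1 t2. 0 \<le> t1 \<longrightarrow> t1 < t2 \<longrightarrow> ?B s t2 < ?B s t1)"
  proof (intro allI impI)
    fix s t1 t2 :: real assume s: "s > 0" and t: "0 \<le> t1" "t1 < t2"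
    have a: "\<beta> s (max (t2/2-1) 0) \<le> \<beta> s (max (t1/2-1) 0)"
      using s t by (intro KL_anti[OF KL]) auto
    have p: "\<beta> s 0 > 0" using KL_pos[OF KL s] by auto
    have b: "\<beta> s 0 * exp(-lam*t2/2) < \<beta> s 0 * exp(-lam*t1/2)"
      using p t lam by simp
    have c: "K * s * exp(-lam*t2) < K * s * exp(-lam*t1)" using s K t lam by simp
    show "?B s t2 < ?B s t1"
      using a b c K by (smt (verit) mult_left_mono)
  qed
  have L: "\<forall>s>0. ((\<lambda>t. ?B s t) \<longlongrightarrow> 0) at_top"
  proof (intro allI impI)
    fix s :: real assume s: "s > 0"
    have bt: "((\<lambda>t. \<beta> s t) \<longlongrightarrow> 0) at_top" using KL s unfolding classKL_def by auto
    have f: "filterlim (\<lambda>t::real. max (t/2-1) 0) at_top at_top"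
    proof (rule filterlim_at_top_mono[of "\<lambda>t. t/2-1"])
      show "filterlim (\<lambda>t::real. t/2-1) at_top at_top"
        unfolding filterlim_at_top eventually_at_top_linorder
        apply (intro allI)
        subgoal for Z by (rule exI[of _ "2*Z+2"]) auto
        done
    qed auto
    have t1: "((\<lambda>t. \<beta> s (max (t/2-1) 0)) \<longlongrightarrow> 0) at_top"
      using filterlim_compose[OF bt f] by simp
    have e1: "((\<lambda>t. exp(-lam*t/2)) \<longlongrightarrow> 0) at_top"
    proof -
      have "filterlim (\<lambda>t. -lam*t/2) at_bot at_top"
        unfolding filterlim_at_bot eventually_at_top_linorder
        apply (intro allI)
        subgoal for Z
          apply (rule exI[of _ "-2*Z/lam"])
          using lam by (auto simp: field_simps)
        done
      then show ?thesis using filterlim_compose[OF exp_at_bot] by auto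
    qed
    have e2: "((\<lambda>t. exp(-lam*t)) \<longlongrightarrow> 0) at_top"
    proof -
      have "filterlim (\<lambda>t. -lam*t) at_bot at_top"
        unfolding filterlim_at_bot eventually_at_top_linorder
        apply (intro allI)
        subgoal for Z
          apply (rule exI[of _ "-Z/lam"])
          using lam by (auto simp: field_simps)
        done
      then show ?thesis using filterlim_compose[OF exp_at_bot] by auto
    qed
    show "((\<lambda>t. ?B s t) \<longlongrightarrow> 0) at_top"
    proof -
      have "((\<lambda>t. ?B s t) \<longlongrightarrow> 2*K*(0 + \<beta> s 0 * 0) + K * s * 0) at_top"
        by (intro tendsto_add tendsto_mult tendsto_const t1 e1 e2)
      then show ?thesis by simp
    qed
  qed
  show ?thesis unfolding classKL_def using C N Z SM SD L by blast
qed

theorem lemma3: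
  fixes F :: "real ^ 'n \<Rightarrow> real \<Rightarrow> real ^ 'n"
  assumes "SLES_VSR F"
  shows "SS_VSR F"
proof -
  obtain \<beta> where KL: "classKL \<beta>" and SPS: "\<forall>M\<ge>0. \<forall>R>0. \<exists>Ts>0. \<forall>k x0 T. T \<in> Phi Ts \<longrightarrow> norm x0 \<le> M \<longrightarrow>
        norm (traj F x0 T k) \<le> \<beta> (norm x0) (\<Sum>i<k. T i) + R"
    using assms unfolding SLES_VSR_def SPS_VSR_def by blast
  obtain K R Ts lam :: real where K: "K \<ge> 1" and R: "R > 0" and Ts: "Ts > 0" and lam: "lam > 0" and
    LES: "\<forall>k x0 T. T \<in> Phi Ts \<longrightarrow> norm x0 \<le> R \<longrightarrow>
        norm (traj F x0 T k) \<le> K * norm x0 * exp (- lam * (\<Sum>i<k. T i))"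
    using assms unfolding SLES_VSR_def LES_VSR_def by blast
  define B where "B = (\<lambda>s t. 2*K*(\<beta> s (max (t/2-1) 0) + \<beta> s 0 * exp(-lam*t/2)) + K * s * exp(-lam*t))"
  have BKL: "classKL B" unfolding B_def by (rule B_KL[OF KL K lam])
  have "\<forall>M\<ge>0. \<exists>Tst>0. \<forall>k x0 T. T \<in> Phi Tst \<longrightarrow> norm x0 \<le> M \<longrightarrow>
        norm (traj F x0 T k) \<le> B (norm x0) (\<Sum>i<k. T i)"
  proof (intro allI impI)
    fix M :: real assume M: "M \<ge> 0"
    obtain T1 where T1: "T1 > 0" and S1: "\<forall>k x0 T. T \<in> Phi T1 \<longrightarrow> norm x0 \<le> M \<longrightarrow>
        norm (traj F x0 T k) \<le> \<beta> (norm x0) (\<Sum>i<k. T i) + R/2"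
      using SPS M R by (meson half_gt_zero)
    define Tst where "Tst = min T1 (min Ts 1)"
    have "Tst > 0" using T1 Ts unfolding Tst_def by auto
    moreover have "\<forall>k x0 T. T \<in> Phi Tst \<longrightarrow> norm x0 \<le> M \<longrightarrow>
        norm (traj F x0 T k) \<le> B (norm x0) (\<Sum>i<k. T i)"
    proof (intro allI impI)
      fix k x0 T assume TP: "T \<in> Phi Tst" and x0: "norm (x0::real^'n) \<le> M"
      define s where "s = norm x0"
      define tt where "tt = (\<lambda>j. \<Sum>i<j. T i)"
      define x where "x = traj F x0 T"
      have Tpos: "\<And>i. 0 < T i" and T1': "\<And>i. T i < 1" using TP unfolding Phi_def Tst_def by auto
      have TP1: "T \<in> Phi T1" and TPs: "T \<in> Phi Ts" using TP unfolding Phi_def Tst_def by auto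
      have s0: "s \<ge> 0" unfolding s_def by simp
      have sps: "\<And>j. norm (x j) \<le> \<beta> s (tt j) + R/2"
        using S1 TP1 x0 unfolding x_def s_def tt_def by blast
      have tt0: "\<And>j. tt j \<ge> 0" unfolding tt_def using Tpos by (simp add: sum_nonneg less_imp_le)
      have ttmono: "\<And>i j. i \<le> j \<Longrightarrow> tt i \<le> tt j"
        unfolding tt_def using Tpos by (intro sum_mono2) (auto simp: less_imp_le)
      have Bge: "\<And>t. t \<ge> 0 \<Longrightarrow> 2*K*\<beta> s (max (t/2-1) 0) \<le> B s t"
        "\<And>t. t \<ge> 0 \<Longrightarrow> 2*K*(\<beta> s 0 * exp(-lam*t/2)) \<le> B s t"
        "\<And>t. t \<ge> 0 \<Longrightarrow> K * s * exp(-lam*t) \<le> B s t"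
      proof -
        fix t :: real assume "t \<ge> 0"
        have a: "\<beta> s (max (t/2-1) 0) \<ge> 0" "\<beta> s 0 \<ge> 0" using KL_nonneg[OF KL s0] by auto
        have b: "K * s * exp(-lam*t) \<ge> 0" using K s0 by simp
        have c: "2*K*(\<beta> s 0 * exp(-lam*t/2)) \<ge> 0" using a K by simp
        have d: "2*K*\<beta> s (max (t/2-1) 0) \<ge> 0" using a K by simp
        show "2*K*\<beta> s (max (t/2-1) 0) \<le> B s t" using b c unfolding B_def by (simp add: distrib_left)
        show "2*K*(\<beta> s 0 * exp(-lam*t/2)) \<le> B s t" using b d unfolding B_def by (simp add: distrib_left)
        show "K * s * exp(-lam*t) \<le> B s t" using c d unfolding B_def by (simp add: distrib_left)
      qed
      show "norm (traj F x0 T k) \<le> B (norm x0) (\<Sum>i<k. T i)"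
      proof -
        have goal: "norm (x k) \<le> B s (tt k)"
        proof (cases "\<beta> s (tt k) \<ge> R/2")
          case True
          have "norm (x k) \<le> 2 * \<beta> s (tt k)" using sps[of k] True by simp
          also have "\<dots> \<le> 2 * \<beta> s (max (tt k/2-1) 0)"
            using KL_anti[OF KL s0, of "max (tt k/2-1) 0" "tt k"] tt0[of k] by auto
          also have "\<dots> \<le> 2*K*\<beta> s (max (tt k/2-1) 0)"
            using mult_right_mono[OF K KL_nonneg[OF KL s0, of "max (tt k/2-1) 0"]] by simp
          also have "\<dots> \<le> B s (tt k)" using Bge(1) tt0 by blast
          finally show ?thesis .
        next
          case False
          define P where "P = (\<lambda>j. \<beta> s (tt j) < R/2)"
          have Pk: "P k" using False unfolding P_def by simp
          define m where "m = (LEAST j. P j)"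
          have Pm: "P m" unfolding m_def by (rule LeastI[of P k, OF Pk])
          have mk: "m \<le> k" unfolding m_def by (rule Least_le[of P k, OF Pk])
          have xm: "norm (x m) \<le> R" using sps[of m] Pm unfolding P_def by simp
          have shT: "(\<lambda>i. T (m+i)) \<in> Phi Ts" using TPs unfolding Phi_def by auto
          have les: "norm (x k) \<le> K * norm (x m) * exp (- lam * (tt k - tt m))"
          proof -
            have "x k = traj F (x m) (\<lambda>i. T (m+i)) (k-m)"
              unfolding x_def using traj_shift[of F x0 T m "k-m"] mk by simp
            moreover have "tt k - tt m = (\<Sum>i<k-m. T (m+i))"
              unfolding tt_def using sum_shift[of T m "k-m"] mk by simp
            ultimately show ?thesis using LES shT xm by simp
          qed
          show ?thesis
          proof (cases "m = 0")
            case True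
            have "x m = x0" "tt m = 0" using True unfolding x_def tt_def by auto
            then have "norm (x k) \<le> K * s * exp(-lam * tt k)" using les unfolding s_def by simp
            also have "\<dots> \<le> B s (tt k)" using Bge(3) tt0 by simp
            finally show ?thesis .
          next
            case False
            have nP: "\<not> P (m-1)" using False unfolding m_def
              by (metis Least_le diff_less less_not_refl3 linorder_not_le m_def not_gr_zero zero_less_one)
            then have bm1: "\<beta> s (tt (m-1)) \<ge> R/2" unfolding P_def by simp
            have xm2: "norm (x m) \<le> 2 * \<beta> s (tt (m-1))" using xm bm1 by simp
            have ttm: "tt m = tt (m-1) + T (m-1)" unfolding tt_def using False
              by (metis Suc_diff_1 not_gr_zero sum.lessThan_Suc)
            have Ex0: "exp (- lam * (tt k - tt m)) \<ge> 0" by simp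
            have "norm (x k) \<le> K * (2 * \<beta> s (tt (m-1))) * exp (- lam * (tt k - tt m))"
              using les xm2 K Ex0 by (smt (verit) mult_left_mono mult_right_mono)
            also have "\<dots> \<le> B s (tt k)"
            proof (cases "tt m \<ge> tt k / 2")
              case True
              have "max (tt k/2-1) 0 \<le> tt (m-1)" using True ttm T1'[of "m-1"] tt0[of "m-1"] by simp
              then have b: "\<beta> s (tt (m-1)) \<le> \<beta> s (max (tt k/2-1) 0)"
                by (intro KL_anti[OF KL s0]) auto
              have e: "exp (- lam * (tt k - tt m)) \<le> 1" using ttmono[OF mk] lam
                by (simp add: mult_nonneg_nonneg)
              have bn: "\<beta> s (tt (m-1)) \<ge> 0" using KL_nonneg[OF KL s0 tt0] by blast
              have "K * (2 * \<beta> s (tt (m-1))) * exp (- lam * (tt k - tt m)) \<le> K * (2 * \<beta> s (tt (m-1)))"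
                using e bn K by (simp add: mult_left_le)
              also have "\<dots> \<le> 2*K*\<beta> s (max (tt k/2-1) 0)" using b K by simp
              also have "\<dots> \<le> B s (tt k)" using Bge(1) tt0 by blast
              finally show ?thesis .
            next
              case False
              have e: "exp (- lam * (tt k - tt m)) \<le> exp(-lam*tt k/2)" using False lam by simp
              have b: "\<beta> s (tt (m-1)) \<le> \<beta> s 0" by (rule KL_anti[OF KL s0]) (auto simp: tt0)
              have bn: "\<beta> s (tt (m-1)) \<ge> 0" using KL_nonneg[OF KL s0 tt0] by blast
              have "K * (2 * \<beta> s (tt (m-1))) * exp (- lam * (tt k - tt m)) \<le> K * (2 * \<beta> s 0) * exp(-lam*tt k/2)"
                using e b bn K by (intro mult_mono) auto
              also have "\<dots> = 2*K*(\<beta> s 0 * exp(-lam*tt k/2))" by simp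
              also have "\<dots> \<le> B s (tt k)" using Bge(2) tt0 by blast
              finally show ?thesis .
            qed
            finally show ?thesis .
          qed
        qed
        then show ?thesis unfolding x_def s_def tt_def .
      qed
    qed
    ultimately show "\<exists>Tst>0. \<forall>k x0 T. T \<in> Phi Tst \<longrightarrow> norm x0 \<le> M \<longrightarrow>
        norm (traj F x0 T k) \<le> B (norm x0) (\<Sum>i<k. T i)" by blast
  qed
  then show ?thesis unfolding SS_VSR_def using BKL by blast
qed

end
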